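(* Let $G=PL_\delta(\mathbb{R}_{+})$ and $H=\{f\in G : \lim_{x\to\infty} f(x)/x = 1\}$. Then the center of the quotient group $G/H$ is trivial.
   Context: A homeomorphism $f$ of $[0,\infty)$ is piecewise linear if its set $B(f)$ of breakpoints (points where $f$ is not differentiable) is discrete and $f$ is affine on each complementary interval. Its set of slopes is $\Lambda(f)=\{f'(t): t\notin B(f)\}$; $\Lambda(f)$ is bounded if there is $K>1$ with $K^{-1}<|\lambda|<K$ for all $\lambda\in\Lambda(f)$. $PL_\delta(\mathbb{R}_{+})$ denotes the group (under composition) of piecewise-linear homeomorphisms of $[0,\infty)$ with bounded set of slopes. $H$ is a normal subgroup of $G$. *)

theory Defs
  imports "HOL-Analysis.Analysis" "HOL-Algebra.Coset"
begin

definition breakpoints :: "(real \<Rightarrow> real) \<Rightarrow> real set" where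
  "breakpoints f = {t \<in> {0..}. \<not> f differentiable (at t within {0..})}"

definition slopes :: "(real \<Rightarrow> real) \<Rightarrow> real set" where
  "slopes f = {l. \<exists>t \<in> {0..} - breakpoints f. (f has_real_derivative l) (at t within {0..})}"

text \<open>Piecewise linear on [0,oo): breakpoint set discrete (closed discrete, i.e. finitely many
  in every bounded interval), and f affine on every interval free of breakpoints.\<close>
definition piecewise_linear :: "(real \<Rightarrow> real) \<Rightarrow> bool" where
  "piecewise_linear f \<longleftrightarrow>
     (\<forall>M. finite (breakpoints f \<inter> {0..M})) \<and>
     (\<forall>a b. 0 \<le> a \<longrightarrow> a < b \<longrightarrow> {a<..<b} \<inter> breakpoints f = {} \<longrightarrow>
        (\<exists>m c. \<forall>x \<in> {a..b}. f x = m * x + c))"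

definition bounded_slopes :: "(real \<Rightarrow> real) \<Rightarrow> bool" where
  "bounded_slopes f \<longleftrightarrow> (\<exists>K>1. \<forall>l \<in> slopes f. inverse K < \<bar>l\<bar> \<and> \<bar>l\<bar> < K)"

text \<open>Elements of PL_delta(R_+), represented as functions real => real that are the identity
  on the negative reals (normalisation so that composition is the group law).\<close>
definition PLd_set :: "(real \<Rightarrow> real) set" where
  "PLd_set = {f. (\<exists>g. homeomorphism {0..} {0..} f g) \<and> piecewise_linear f \<and> bounded_slopes f
                 \<and> (\<forall>x<0. f x = x)}"

definition PLd :: "(real \<Rightarrow> real) monoid" where
  "PLd = \<lparr>carrier = PLd_set, mult = (\<circ>), one = id\<rparr>"

definition H_asym :: "(real \<Rightarrow> real) set" where
  "H_asym = {f \<in> PLd_set. ((\<lambda>x. f x / x) \<longlongrightarrow> 1) at_top}"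

definition group_center :: "('a, 'b) monoid_scheme \<Rightarrow> 'a set" where
  "group_center G = {z \<in> carrier G. \<forall>g \<in> carrier G. z \<otimes>\<^bsub>G\<^esub> g = g \<otimes>\<^bsub>G\<^esub> z}"

end

theory Submission
  imports Defs
begin

lemma loc_mono:
  fixes h :: "real \<Rightarrow> real"
  assumes ab: "a \<le> b"
    and loc: "\<And>t. a \<le> t \<Longrightarrow> t \<le> b \<Longrightarrow> \<exists>e>0. (\<forall>x. a \<le> x \<and> t - e \<le> x \<and> x \<le> t \<longrightarrow> h x \<le> h t)
                 \<and> (\<forall>x. t \<le> x \<and> x \<le> t + e \<and> x \<le> b \<longrightarrow> h t \<le> h x)"
  shows "h a \<le> h b"
proof (rule ccontr)
  assume nb: "\<not> h a \<le> h b"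
  define C where "C = {x. a \<le> x \<and> x \<le> b \<and> h x < h a}"
  have bC: "b \<in> C" using nb ab by (auto simp: C_def)
  have bdd: "bdd_below C" unfolding C_def by (rule bdd_belowI[of _ a]) auto
  define c where "c = Inf C"
  have cle: "\<And>y. y \<in> C \<Longrightarrow> c \<le> y" unfolding c_def using bdd by (rule cInf_lower[rotated])
  have ac: "a \<le> c" unfolding c_def using bC by (intro cInf_greatest) (auto simp: C_def)
  have cb: "c \<le> b" using cle[OF bC] .
  have below: "\<And>x. a \<le> x \<Longrightarrow> x < c \<Longrightarrow> h a \<le> h x"
    using cle cb by (force simp: C_def)
  obtain e where e: "e > 0" and el: "\<forall>x. a \<le> x \<and> c - e \<le> x \<and> x \<le> c \<longrightarrow> h x \<le> h c"
    and er: "\<forall>x. c \<le> x \<and> x \<le> c + e \<and> x \<le> b \<longrightarrow> h c \<le> h x"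
    using loc[OF ac cb] by blast
  show False
  proof (cases "h c < h a")
    case True
    then have "c \<noteq> a" by auto
    with ac have "a < c" by auto
    define x where "x = max a (c - e/2)"
    have "a \<le> x" "x < c" "c - e \<le> x" using \<open>a < c\<close> e by (auto simp: x_def)
    then have "h a \<le> h x" "h x \<le> h c" using below el by auto
    then show False using True by auto
  next
    case False
    then have "c \<noteq> b" using bC by (auto simp: C_def)
    with cb have "c < b" by auto
    define e' where "e' = min e (b - c)"
    have e'p: "e' > 0" using e \<open>c < b\<close> by (auto simp: e'_def)
    have "c + e' \<le> Inf C"
    proof (rule cInf_greatest)
      show "C \<noteq> {}" using bC by auto
      fix y assume y: "y \<in> C"
      have "c \<le> y" using cle[OF y] .
      show "c + e' \<le> y"
      proof (rule ccontr)
        assume "\<not> c + e' \<le> y"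
        then have "y \<le> c + e" "y \<le> b" using e'_def by auto
        then have "h c \<le> h y" using er \<open>c \<le> y\<close> by auto
        then show False using False y by (auto simp: C_def)
      qed
    qed
    then show False using e'p by (auto simp: c_def)
  qed
qed

definition LA :: "(real \<Rightarrow> real) \<Rightarrow> real \<Rightarrow> real \<Rightarrow> bool" where
  "LA f t K \<longleftrightarrow> (\<exists>e>0. \<exists>m1 m2. 1/K \<le> m1 \<and> m1 \<le> K \<and> 1/K \<le> m2 \<and> m2 \<le> K
     \<and> (\<forall>x. 0 \<le> x \<and> t - e \<le> x \<and> x \<le> t \<longrightarrow> f x = f t + m1 * (x - t))
     \<and> (\<forall>x. t \<le> x \<and> x \<le> t + e \<longrightarrow> f x = f t + m2 * (x - t)))"

definition PP :: "(real \<Rightarrow> real) \<Rightarrow> real \<Rightarrow> bool" where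
  "PP f K \<longleftrightarrow> 1 \<le> K \<and> (\<forall>t\<ge>0. LA f t K) \<and> f 0 = 0 \<and> (\<forall>x<0. f x = x)"

lemma LAE:
  assumes "LA f t K"
  obtains e m1 m2 where "e > 0" "1/K \<le> m1" "m1 \<le> K" "1/K \<le> m2" "m2 \<le> K"
    "\<And>x. 0 \<le> x \<Longrightarrow> t - e \<le> x \<Longrightarrow> x \<le> t \<Longrightarrow> f x = f t + m1 * (x - t)"
    "\<And>x. t \<le> x \<Longrightarrow> x \<le> t + e \<Longrightarrow> f x = f t + m2 * (x - t)"
  using assms unfolding LA_def by blast

lemma PP_BL:
  assumes P: "PP f K" and y: "0 \<le> y" and yx: "y \<le> x"
  shows "(x - y) / K \<le> f x - f y \<and> f x - f y \<le> K * (x - y)"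
proof -
  have K: "K \<ge> 1" using P by (simp add: PP_def)
  have A: "(\<lambda>z. f z - z / K) y \<le> (\<lambda>z. f z - z / K) x"
  proof (rule loc_mono[OF yx])
    fix t assume t: "y \<le> t" "t \<le> x"
    then have "LA f t K" using P y by (simp add: PP_def)
    then obtain e m1 m2 where e: "e > 0" and m: "1/K \<le> m1" "m1 \<le> K" "1/K \<le> m2" "m2 \<le> K"
      and l: "\<And>x. 0 \<le> x \<Longrightarrow> t - e \<le> x \<Longrightarrow> x \<le> t \<Longrightarrow> f x = f t + m1 * (x - t)"
      and r: "\<And>x. t \<le> x \<Longrightarrow> x \<le> t + e \<Longrightarrow> f x = f t + m2 * (x - t)"
      by (erule LAE)
    show "\<exists>e>0. (\<forall>z. y \<le> z \<and> t - e \<le> z \<and> z \<le> t \<longrightarrow> f z - z / K \<le> f t - t / K)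
                 \<and> (\<forall>z. t \<le> z \<and> z \<le> t + e \<and> z \<le> x \<longrightarrow> f t - t / K \<le> f z - z / K)"
    proof (intro exI[of _ e] conjI allI impI e)
      fix z assume z: "y \<le> z \<and> t - e \<le> z \<and> z \<le> t"
      then have "f z = f t + m1 * (z - t)" using z y by (intro l) auto
      moreover have "(m1 - 1/K) * (z - t) \<le> 0" using m z by (intro mult_nonneg_nonpos) auto
      ultimately show "f z - z / K \<le> f t - t / K" by (simp add: algebra_simps diff_divide_distrib)
    next
      fix z assume z: "t \<le> z \<and> z \<le> t + e \<and> z \<le> x"
      then have "f z = f t + m2 * (z - t)" using z by (intro r) auto
      moreover have "(m2 - 1/K) * (z - t) \<ge> 0" using m z by (intro mult_nonneg_nonneg) auto
      ultimately show "f t - t / K \<le> f z - z / K" by (simp add: algebra_simps diff_divide_distrib)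
    qed
  qed
  have B: "(\<lambda>z. K * z - f z) y \<le> (\<lambda>z. K * z - f z) x"
  proof (rule loc_mono[OF yx])
    fix t assume t: "y \<le> t" "t \<le> x"
    then have "LA f t K" using P y by (simp add: PP_def)
    then obtain e m1 m2 where e: "e > 0" and m: "1/K \<le> m1" "m1 \<le> K" "1/K \<le> m2" "m2 \<le> K"
      and l: "\<And>x. 0 \<le> x \<Longrightarrow> t - e \<le> x \<Longrightarrow> x \<le> t \<Longrightarrow> f x = f t + m1 * (x - t)"
      and r: "\<And>x. t \<le> x \<Longrightarrow> x \<le> t + e \<Longrightarrow> f x = f t + m2 * (x - t)"
      by (erule LAE)
    show "\<exists>e>0. (\<forall>z. y \<le> z \<and> t - e \<le> z \<and> z \<le> t \<longrightarrow> K * z - f z \<le> K * t - f t)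
                 \<and> (\<forall>z. t \<le> z \<and> z \<le> t + e \<and> z \<le> x \<longrightarrow> K * t - f t \<le> K * z - f z)"
    proof (intro exI[of _ e] conjI allI impI e)
      fix z assume z: "y \<le> z \<and> t - e \<le> z \<and> z \<le> t"
      then have "f z = f t + m1 * (z - t)" using z y by (intro l) auto
      moreover have "(K - m1) * (z - t) \<le> 0" using m z by (intro mult_nonneg_nonpos) auto
      ultimately show "K * z - f z \<le> K * t - f t" by (simp add: algebra_simps diff_divide_distrib)
    next
      fix z assume z: "t \<le> z \<and> z \<le> t + e \<and> z \<le> x"
      then have "f z = f t + m2 * (z - t)" using z by (intro r) auto
      moreover have "(K - m2) * (z - t) \<ge> 0" using m z by (intro mult_nonneg_nonneg) auto
      ultimately show "K * t - f t \<le> K * z - f z" by (simp add: algebra_simps diff_divide_distrib)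
    qed
  qed
  from A have "(x - y) / K \<le> f x - f y" by (simp add: diff_divide_distrib)
  moreover from B have "f x - f y \<le> K * (x - y)" by (simp add: right_diff_distrib)
  ultimately show ?thesis by blast
qed

lemma PP_K: "PP f K \<Longrightarrow> 1 \<le> K" by (simp add: PP_def)
lemma PP_0: "PP f K \<Longrightarrow> f 0 = 0" by (simp add: PP_def)
lemma PP_neg: "PP f K \<Longrightarrow> x < 0 \<Longrightarrow> f x = x" by (simp add: PP_def)
lemma PP_LA: "PP f K \<Longrightarrow> 0 \<le> t \<Longrightarrow> LA f t K" by (simp add: PP_def)

lemma PP_lower: "PP f K \<Longrightarrow> 0 \<le> x \<Longrightarrow> x / K \<le> f x"
  using PP_BL[of f K 0 x] by (simp add: PP_0)
lemma PP_upper: "PP f K \<Longrightarrow> 0 \<le> x \<Longrightarrow> f x \<le> K * x"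
  using PP_BL[of f K 0 x] by (simp add: PP_0)
lemma PP_nonneg: "PP f K \<Longrightarrow> 0 \<le> x \<Longrightarrow> 0 \<le> f x"
  using PP_lower[of f K x] PP_K[of f K] by (smt (verit) divide_nonneg_pos)
lemma PP_pos: "PP f K \<Longrightarrow> 0 < x \<Longrightarrow> 0 < f x"
  using PP_lower[of f K x] PP_K[of f K] by (smt (verit) divide_pos_pos)
lemma PP_strict: "PP f K \<Longrightarrow> 0 \<le> y \<Longrightarrow> y < x \<Longrightarrow> f y < f x"
  using PP_BL[of f K y x] PP_K[of f K] by (smt (verit) divide_pos_pos)
lemma PP_le_iff: "PP f K \<Longrightarrow> 0 \<le> y \<Longrightarrow> 0 \<le> x \<Longrightarrow> f y \<le> f x \<longleftrightarrow> y \<le> x"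
  using PP_strict[of f K y x] PP_strict[of f K x y] by force
lemma PP_lip: "PP f K \<Longrightarrow> 0 \<le> x \<Longrightarrow> 0 \<le> y \<Longrightarrow> \<bar>f x - f y\<bar> \<le> K * \<bar>x - y\<bar>"
proof -
  assume a: "PP f K" "0 \<le> x" "0 \<le> y"
  show ?thesis
  proof (cases "y \<le> x")
    case True
    then show ?thesis using PP_BL[of f K y x] a PP_K[of f K] by (smt (verit) divide_nonneg_pos)
  next
    case False
    then show ?thesis using PP_BL[of f K x y] a PP_K[of f K] by (smt (verit) divide_nonneg_pos)
  qed
qed

lemma PP_cont: assumes "PP f K" shows "continuous_on {0..} f"
proof -
  have K: "K \<ge> 1" using assms PP_K by auto
  show ?thesis unfolding continuous_on_iff
  proof (intro ballI allI impI)
    fix x e :: real assume x: "x \<in> {0..}" and e: "e > 0"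
    show "\<exists>d>0. \<forall>x'\<in>{0..}. dist x' x < d \<longrightarrow> dist (f x') (f x) < e"
    proof (intro exI[of _ "e / K"] conjI ballI impI)
      show "e / K > 0" using e K by simp
      fix y assume y: "y \<in> {0..}" "dist y x < e / K"
      have "\<bar>f y - f x\<bar> \<le> K * \<bar>y - x\<bar>" using PP_lip[OF assms] x y by auto
      also have "\<dots> < K * (e / K)" using y K by (intro mult_strict_left_mono) (auto simp: dist_real_def)
      also have "\<dots> = e" using K by simp
      finally show "dist (f y) (f x) < e" by (simp add: dist_real_def)
    qed
  qed
qed

lemma LAI:
  assumes "e > 0" "1/K \<le> m1" "m1 \<le> K" "1/K \<le> m2" "m2 \<le> K"
    "\<And>x. 0 \<le> x \<Longrightarrow> t - e \<le> x \<Longrightarrow> x \<le> t \<Longrightarrow> f x = f t + m1 * (x - t)"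
    "\<And>x. t \<le> x \<Longrightarrow> x \<le> t + e \<Longrightarrow> f x = f t + m2 * (x - t)"
  shows "LA f t K"
  unfolding LA_def using assms by blast

lemma LA_comp:
  assumes f: "PP f K1" and g: "PP g K2" and t: "0 \<le> t"
  shows "LA (f \<circ> g) t (K1 * K2)"
proof -
  have K1: "K1 \<ge> 1" and K2: "K2 \<ge> 1" using f g PP_K by auto
  obtain e m1 m2 where e: "e > 0" and m: "1/K2 \<le> m1" "m1 \<le> K2" "1/K2 \<le> m2" "m2 \<le> K2"
      and l: "\<And>x. 0 \<le> x \<Longrightarrow> t - e \<le> x \<Longrightarrow> x \<le> t \<Longrightarrow> g x = g t + m1 * (x - t)"
      and r: "\<And>x. t \<le> x \<Longrightarrow> x \<le> t + e \<Longrightarrow> g x = g t + m2 * (x - t)"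
    using PP_LA[OF g t] by (erule LAE)
  have gt: "0 \<le> g t" using PP_nonneg[OF g t] .
  obtain e' n1 n2 where e': "e' > 0" and n: "1/K1 \<le> n1" "n1 \<le> K1" "1/K1 \<le> n2" "n2 \<le> K1"
      and l': "\<And>x. 0 \<le> x \<Longrightarrow> g t - e' \<le> x \<Longrightarrow> x \<le> g t \<Longrightarrow> f x = f (g t) + n1 * (x - g t)"
      and r': "\<And>x. g t \<le> x \<Longrightarrow> x \<le> g t + e' \<Longrightarrow> f x = f (g t) + n2 * (x - g t)"
    using PP_LA[OF f gt] by (erule LAE)
  define d where "d = min e (e' / K2)"
  have d: "d > 0" "d \<le> e" using e e' K2 by (auto simp: d_def)
  have "K2 * d \<le> K2 * (e' / K2)" using K2 by (intro mult_left_mono) (auto simp: d_def)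
  then have d3: "K2 * d \<le> e'" using K2 by simp
  have pos: "0 < 1/K1" "0 < 1/K2" using K1 K2 by auto
  have mp: "0 \<le> m1" "0 \<le> m2" using m pos by linarith+
  have b1: "1 / (K1 * K2) \<le> n1 * m1" "n1 * m1 \<le> K1 * K2"
    using mult_mono[of "1/K1" n1 "1/K2" m1] mult_mono[of n1 K1 m1 K2] n m pos by auto
  have b2: "1 / (K1 * K2) \<le> n2 * m2" "n2 * m2 \<le> K1 * K2"
    using mult_mono[of "1/K1" n2 "1/K2" m2] mult_mono[of n2 K1 m2 K2] n m pos by auto
  show ?thesis
  proof (rule LAI[OF d(1) b1 b2])
    fix x assume x: "0 \<le> x" "t - d \<le> x" "x \<le> t"
    have gx: "g x = g t + m1 * (x - t)" using x d by (intro l) auto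
    have "m1 * (t - x) \<le> K2 * d" using m mp x d by (intro mult_mono) auto
    then have "m1 * (t - x) \<le> e'" using d3 by linarith
    moreover have "0 \<le> m1 * (t - x)" using mp x by (intro mult_nonneg_nonneg) auto
    ultimately have gg: "g t - e' \<le> g x" "g x \<le> g t" using gx by (simp_all add: algebra_simps)
    have g0: "0 \<le> g x" using PP_nonneg[OF g] x by auto
    have "f (g x) = f (g t) + n1 * (g x - g t)" by (rule l'[OF g0 gg])
    then show "(f \<circ> g) x = (f \<circ> g) t + n1 * m1 * (x - t)" using gx by simp
  next
    fix x assume x: "t \<le> x" "x \<le> t + d"
    have gx: "g x = g t + m2 * (x - t)" using x d by (intro r) auto
    have "m2 * (x - t) \<le> K2 * d" using m mp x d by (intro mult_mono) auto
    then have "m2 * (x - t) \<le> e'" using d3 by linarith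
    moreover have "0 \<le> m2 * (x - t)" using mp x by (intro mult_nonneg_nonneg) auto
    ultimately have gg: "g t \<le> g x" "g x \<le> g t + e'" using gx by (simp_all add: algebra_simps)
    have "f (g x) = f (g t) + n2 * (g x - g t)" by (rule r'[OF gg])
    then show "(f \<circ> g) x = (f \<circ> g) t + n2 * m2 * (x - t)" using gx by simp
  qed
qed

lemma PP_comp: assumes f: "PP f K1" and g: "PP g K2" shows "PP (f \<circ> g) (K1 * K2)"
proof -
  have "1 \<le> K1 * K2" using mult_mono[of 1 K1 1 K2] PP_K[OF f] PP_K[OF g] by simp
  then show ?thesis
    unfolding PP_def using LA_comp[OF f g] PP_0[OF f] PP_0[OF g] PP_neg[OF f] PP_neg[OF g] by simp
qed

definition finv :: "(real \<Rightarrow> real) \<Rightarrow> real \<Rightarrow> real" where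
  "finv f y = (if y < 0 then y else (THE x. 0 \<le> x \<and> f x = y))"

lemma PP_surj: assumes f: "PP f K" and y: "0 \<le> y" shows "\<exists>x\<ge>0. f x = y"
proof -
  have K: "K \<ge> 1" using PP_K[OF f] .
  have "y \<le> f (K * y)" using PP_lower[OF f, of "K * y"] K y by simp
  moreover have "f 0 \<le> y" using PP_0[OF f] y by simp
  moreover have "0 \<le> K * y" using K y by simp
  moreover have "continuous_on {0..K * y} f" using PP_cont[OF f] by (rule continuous_on_subset) auto
  ultimately obtain x where "0 \<le> x" "f x = y" using IVT'[of f 0 y "K * y"] by auto
  then show ?thesis by blast
qed

lemma finv: assumes f: "PP f K" and y: "0 \<le> y" shows "0 \<le> finv f y \<and> f (finv f y) = y"
proof -
  obtain x where x: "0 \<le> x" "f x = y" using PP_surj[OF f y] by blast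
  have u: "x' = x" if x': "0 \<le> x' \<and> f x' = y" for x'
  proof -
    have "x' \<le> x" using PP_le_iff[OF f _ x(1), of x'] x' x by auto
    moreover have "x \<le> x'" using PP_le_iff[OF f x(1), of x'] x' x by auto
    ultimately show ?thesis by auto
  qed
  have "(THE x. 0 \<le> x \<and> f x = y) = x"
  proof (rule the_equality)
    show "0 \<le> x \<and> f x = y" using x by simp
  next
    fix x' assume "0 \<le> x' \<and> f x' = y" then show "x' = x" by (rule u)
  qed
  then show ?thesis using x y by (simp add: finv_def)
qed

lemma finv_f: assumes f: "PP f K" shows "finv f (f x) = x"
proof (cases "x < 0")
  case True then show ?thesis using PP_neg[OF f True] by (simp add: finv_def)
next
  case False
  then have x: "0 \<le> x" by simp
  have fx: "0 \<le> f x" using PP_nonneg[OF f x] .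
  have a: "0 \<le> finv f (f x)" "f (finv f (f x)) = f x" using finv[OF f fx] by auto
  show ?thesis using PP_le_iff[OF f a(1) x] PP_le_iff[OF f x a(1)] a(2) by auto
qed

lemma f_finv: assumes f: "PP f K" shows "f (finv f y) = y"
  using finv[OF f, of y] PP_neg[OF f, of y] by (cases "y < 0") (auto simp: finv_def)

lemma finv_nonneg: "PP f K \<Longrightarrow> 0 \<le> y \<Longrightarrow> 0 \<le> finv f y"
  using finv by blast

lemma PP_finv: assumes f: "PP f K" shows "PP (finv f) K"
proof -
  have K: "K \<ge> 1" using PP_K[OF f] .
  have LAf: "LA (finv f) y K" if y: "0 \<le> y" for y
  proof -
    define x0 where "x0 = finv f y"
    have x0: "0 \<le> x0" "f x0 = y" using finv[OF f y] by (auto simp: x0_def)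
    obtain e m1 m2 where e: "e > 0" and m: "1/K \<le> m1" "m1 \<le> K" "1/K \<le> m2" "m2 \<le> K"
      and l: "\<And>x. 0 \<le> x \<Longrightarrow> x0 - e \<le> x \<Longrightarrow> x \<le> x0 \<Longrightarrow> f x = f x0 + m1 * (x - x0)"
      and r: "\<And>x. x0 \<le> x \<Longrightarrow> x \<le> x0 + e \<Longrightarrow> f x = f x0 + m2 * (x - x0)"
      using PP_LA[OF f x0(1)] by (erule LAE)
    have mpos: "m1 > 0" "m2 > 0" using m K by (auto intro: less_le_trans[of 0 "1/K"])
    have em: "e / K \<le> m1 * e" "e / K \<le> m2 * e" using m e
      by (auto simp: divide_inverse intro!: mult_right_mono[of "1/K" _ e, simplified])
    have eK: "e / K > 0" using e K by simp
    have mb: "1 / K \<le> 1 / m1" "1 / m1 \<le> K" "1 / K \<le> 1 / m2" "1 / m2 \<le> K"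
        using m mpos K by (auto simp: field_simps)
    show ?thesis
    proof (rule LAI[OF eK mb])
      fix z assume z: "0 \<le> z" "y - e / K \<le> z" "z \<le> y"
      define x where "x = finv f z"
      have x: "0 \<le> x" "f x = z" using finv[OF f] z by (auto simp: x_def)
      have "x \<le> x0" using PP_le_iff[OF f x(1) x0(1)] x x0 z by auto
      moreover have "x0 - e \<le> x"
      proof (rule ccontr)
        assume c: "\<not> x0 - e \<le> x"
        then have "0 \<le> x0 - e" using x by auto
        then have "f x < f (x0 - e)" using PP_strict[OF f x(1)] c by auto
        also have "f (x0 - e) = y - m1 * e" using l[of "x0 - e"] \<open>0 \<le> x0 - e\<close> e x0 by auto
        finally show False using x z em by auto
      qed
      ultimately have "z = y + m1 * (x - x0)" using l[of x] x x0 by auto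
      then have "x = x0 + (z - y) / m1" using mpos by (auto simp: field_simps)
      then show "finv f z = finv f y + 1 / m1 * (z - y)" by (simp add: x_def x0_def)
    next
      fix z assume z: "y \<le> z" "z \<le> y + e / K"
      have z0: "0 \<le> z" using z y by auto
      define x where "x = finv f z"
      have x: "0 \<le> x" "f x = z" using finv[OF f z0] by (auto simp: x_def)
      have "x0 \<le> x" using PP_le_iff[OF f x0(1) x(1)] x x0 z by auto
      moreover have "x \<le> x0 + e"
      proof (rule ccontr)
        assume c: "\<not> x \<le> x0 + e"
        then have "f (x0 + e) < f x" using PP_strict[OF f, of "x0 + e" x] x0 e by auto
        also have "f (x0 + e) = y + m2 * e" using r[of "x0 + e"] e x0 by auto
        finally show False using x z em by auto
      qed
      ultimately have "z = y + m2 * (x - x0)" using r[of x] x x0 by auto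
      then have "x = x0 + (z - y) / m2" using mpos by (auto simp: field_simps)
      then show "finv f z = finv f y + 1 / m2 * (z - y)" by (simp add: x_def x0_def)
    qed
  qed
  have f0: "finv f 0 = 0" using finv_f[OF f, of 0] PP_0[OF f] by simp
  have neg: "\<forall>x<0. finv f x = x" by (simp add: finv_def)
  show ?thesis unfolding PP_def
    by (intro conjI allI impI K LAf f0 neg[rule_format]) assumption+
qed

lemma aff_deriv:
  assumes "a < p" "p < b" "\<And>x. a < x \<Longrightarrow> x < b \<Longrightarrow> f x = c + m * x"
  shows "(f has_real_derivative m) (at p)"
proof -
  have "((\<lambda>x. c + m * x) has_real_derivative m) (at p)"
    by (auto intro!: derivative_eq_intros)
  then show ?thesis
    by (rule has_field_derivative_transform_within_open[of _ _ _ "{a<..<b}"]) (use assms in auto)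
qed

lemma aff_not_break:
  assumes "0 < p" "a < p" "p < b" "\<And>x. a < x \<Longrightarrow> x < b \<Longrightarrow> f x = c + m * x"
  shows "p \<notin> breakpoints f"
proof -
  have "(f has_real_derivative m) (at p within {0..})"
    by (rule has_field_derivative_at_within, rule aff_deriv[of a p b f c m]) (use assms in auto)
  then have "f differentiable at p within {0..}"
    using real_differentiable_def by blast
  then show ?thesis by (simp add: breakpoints_def)
qed

lemma slope_right:
  assumes "(f has_real_derivative l) (at t within {0..})" "0 \<le> t" "e > 0"
    and "\<And>x. t \<le> x \<Longrightarrow> x \<le> t + e \<Longrightarrow> f x = f t + m * (x - t)"
  shows "l = m"
proof -
  have "((\<lambda>y. (f y - f t) / (y - t)) \<longlongrightarrow> l) (at t within {0..})"
    using assms(1) by (simp add: has_field_derivative_iff)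
  then have "((\<lambda>y. (f y - f t) / (y - t)) \<longlongrightarrow> l) (at_right t)"
    by (rule tendsto_within_subset) (use assms(2) in auto)
  moreover have "eventually (\<lambda>y. (f y - f t) / (y - t) = m) (at_right t)"
  proof (subst eventually_at_right[of t "t + e"])
    show "t < t + e" using assms(3) by simp
    have q: "(f y - f t) / (y - t) = m" if "t < y" "y < t + e" for y
    proof -
      have "f y = f t + m * (y - t)" using that by (intro assms(4)) auto
      then show ?thesis using that by (simp add: field_simps)
    qed
    show "\<exists>b>t. \<forall>y>t. y < b \<longrightarrow> (f y - f t) / (y - t) = m"
      using q assms(3) by (intro exI[of _ "t + e"]) auto
  qed
  ultimately have "((\<lambda>y. m) \<longlongrightarrow> l) (at_right t)" by (rule Lim_transform_eventually)
  then show ?thesis using tendsto_const_iff[of "at_right t" m l] by auto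
qed

lemma slope_left:
  assumes "(f has_real_derivative l) (at t)" "e > 0"
    and "\<And>x. t - e \<le> x \<Longrightarrow> x \<le> t \<Longrightarrow> f x = f t + m * (x - t)"
  shows "l = m"
proof -
  have "((\<lambda>y. (f y - f t) / (y - t)) \<longlongrightarrow> l) (at t)"
    using assms(1) by (simp add: has_field_derivative_iff)
  then have "((\<lambda>y. (f y - f t) / (y - t)) \<longlongrightarrow> l) (at_left t)"
    by (rule tendsto_within_subset) auto
  moreover have "eventually (\<lambda>y. (f y - f t) / (y - t) = m) (at_left t)"
  proof (subst eventually_at_left[of "t - e" t])
    show "t - e < t" using assms(2) by simp
    have q: "(f y - f t) / (y - t) = m" if "t - e < y" "y < t" for y
    proof -
      have "f y = f t + m * (y - t)" using that by (intro assms(3)) auto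
      then show ?thesis using that by (simp add: field_simps)
    qed
    show "\<exists>b<t. \<forall>y>b. y < t \<longrightarrow> (f y - f t) / (y - t) = m"
      using q assms(2) by (intro exI[of _ "t - e"]) auto
  qed
  ultimately have "((\<lambda>y. m) \<longlongrightarrow> l) (at_left t)" by (rule Lim_transform_eventually)
  then show ?thesis using tendsto_const_iff[of "at_left t" m l] by auto
qed

lemma PP_iso:
  assumes f: "PP f K" and t: "0 \<le> t"
  shows "\<exists>e>0. \<forall>y. 0 \<le> y \<and> y \<noteq> t \<and> \<bar>y - t\<bar> < e \<longrightarrow> y \<notin> breakpoints f"
proof -
  obtain e0 m1 m2 where e0: "e0 > 0" and "1/K \<le> m1" "m1 \<le> K" "1/K \<le> m2" "m2 \<le> K"
      and l: "\<And>x. 0 \<le> x \<Longrightarrow> t - e0 \<le> x \<Longrightarrow> x \<le> t \<Longrightarrow> f x = f t + m1 * (x - t)"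
      and r: "\<And>x. t \<le> x \<Longrightarrow> x \<le> t + e0 \<Longrightarrow> f x = f t + m2 * (x - t)"
    using PP_LA[OF f t] by (erule LAE)
  define e where "e = (if t > 0 then min e0 t else e0)"
  have e: "e > 0" "e \<le> e0" "t > 0 \<Longrightarrow> e \<le> t" using e0 t by (auto simp: e_def)
  show ?thesis
  proof (intro exI[of _ e] conjI allI impI e(1))
    fix y assume y: "0 \<le> y \<and> y \<noteq> t \<and> \<bar>y - t\<bar> < e"
    show "y \<notin> breakpoints f"
    proof (cases "y < t")
      case True
      then have "t > 0" using y by auto
      have "y > t - e" using y True by auto
      then have "y > 0" using e(3)[OF \<open>t > 0\<close>] by auto
      show ?thesis
      proof (rule aff_not_break[of y "t - e" t f "f t - m1 * t" m1])
        fix x assume "t - e < x" "x < t"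
        then have "f x = f t + m1 * (x - t)" using e(2,3) \<open>t > 0\<close> by (intro l) auto
        then show "f x = f t - m1 * t + m1 * x" by (simp add: algebra_simps)
      qed (use \<open>y > 0\<close> \<open>y > t - e\<close> True in auto)
    next
      case False
      then have "y > t" using y by auto
      show ?thesis
      proof (rule aff_not_break[of y t "t + e" f "f t - m2 * t" m2])
        fix x assume "t < x" "x < t + e"
        then have "f x = f t + m2 * (x - t)" using e(2) by (intro r) auto
        then show "f x = f t - m2 * t + m2 * x" by (simp add: algebra_simps)
      qed (use \<open>y > t\<close> y t in auto)
    qed
  qed
qed

lemma PP_finite_break:
  assumes f: "PP f K" shows "finite (breakpoints f \<inter> {0..M})"
proof -
  have "finite ({0..M} \<inter> breakpoints f)"
  proof (rule finite_not_islimpt_in_compact)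
    show "compact {0..M}" by simp
    fix z assume z: "z \<in> {0..M}"
    obtain e where e: "e > 0" and nb: "\<forall>y. 0 \<le> y \<and> y \<noteq> z \<and> \<bar>y - z\<bar> < e \<longrightarrow> y \<notin> breakpoints f"
      using PP_iso[OF f, of z] z by auto
    show "\<not> z islimpt breakpoints f"
    proof
      assume "z islimpt breakpoints f"
      then obtain y where "y \<in> breakpoints f" "y \<noteq> z" "dist y z < e"
        using e by (auto simp: islimpt_approachable)
      moreover have "0 \<le> y" using \<open>y \<in> breakpoints f\<close> by (simp add: breakpoints_def)
      ultimately show False using nb by (auto simp: dist_real_def)
    qed
  qed
  then show ?thesis by (simp add: Int_commute)
qed

lemma PP_local_aff:
  assumes f: "PP f K" and s: "0 < s" and nb: "s \<notin> breakpoints f"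
  shows "\<exists>e>0. \<exists>m. \<forall>x. \<bar>x - s\<bar> < e \<longrightarrow> f x = f s + m * (x - s)"
proof -
  have "f differentiable at s within {0..}" using nb s by (simp add: breakpoints_def)
  then obtain l where l: "(f has_real_derivative l) (at s within {0..})"
    using real_differentiable_def by blast
  have "(f has_real_derivative l) (at s within {0<..})" using l by (rule DERIV_subset) auto
  then have la: "(f has_real_derivative l) (at s)" using at_within_open[of s "{0<..}"] s by simp
  obtain e0 m1 m2 where e0: "e0 > 0" and "1/K \<le> m1" "m1 \<le> K" "1/K \<le> m2" "m2 \<le> K"
      and lft: "\<And>x. 0 \<le> x \<Longrightarrow> s - e0 \<le> x \<Longrightarrow> x \<le> s \<Longrightarrow> f x = f s + m1 * (x - s)"
      and rgt: "\<And>x. s \<le> x \<Longrightarrow> x \<le> s + e0 \<Longrightarrow> f x = f s + m2 * (x - s)"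
    using PP_LA[OF f less_imp_le[OF s]] by (erule LAE)
  define e where "e = min e0 s"
  have e: "e > 0" "e \<le> e0" "e \<le> s" using e0 s by (auto simp: e_def)
  have "l = m2" using slope_right[OF l _ e0 rgt] s by auto
  moreover have "l = m1"
  proof (rule slope_left[OF la e(1)])
    fix x assume "s - e \<le> x" "x \<le> s"
    then show "f x = f s + m1 * (x - s)" using e by (intro lft) auto
  qed
  ultimately have m12: "m1 = l" "m2 = l" by auto
  show ?thesis
  proof (rule exI[of _ e], rule conjI[OF e(1)], rule exI[of _ l], intro allI impI)
    fix x assume x: "\<bar>x - s\<bar> < e"
    show "f x = f s + l * (x - s)"
    proof (cases "x \<le> s")
      case True then show ?thesis using x e m12 by (intro trans[OF lft]) auto
    next
      case False then show ?thesis using x e m12 by (intro trans[OF rgt]) auto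
    qed
  qed
qed

lemma PP_affine:
  assumes f: "PP f K" and a: "0 \<le> a" and ab: "a < b" and nb: "{a<..<b} \<inter> breakpoints f = {}"
  shows "\<exists>m c. \<forall>x\<in>{a..b}. f x = m * x + c"
proof -
  have loc: "\<exists>e>0. \<exists>m. \<forall>x. \<bar>x - s\<bar> < e \<longrightarrow> f x = f s + m * (x - s)" if s: "a < s" "s < b" for s
  proof -
    have "s \<notin> breakpoints f" using nb s by auto
    then show ?thesis using PP_local_aff[OF f, of s] s a by auto
  qed
  have der: "DERIV f x :> deriv f x" if x: "a < x" "x < b" for x
  proof -
    obtain e m where e: "e > 0" and fm: "\<forall>y. \<bar>y - x\<bar> < e \<longrightarrow> f y = f x + m * (y - x)"
      using loc[OF x] by blast
    have "DERIV f x :> m"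
      by (rule aff_deriv[of "x - e" x "x + e" f "f x - m * x" m]) (use e fm in \<open>auto simp: algebra_simps\<close>)
    then show ?thesis using DERIV_imp_deriv by metis
  qed
  have der0: "DERIV (deriv f) x :> 0" if x: "a < x" "x < b" for x
  proof -
    obtain e m where e: "e > 0" and fm: "\<forall>y. \<bar>y - x\<bar> < e \<longrightarrow> f y = f x + m * (y - x)"
      using loc[OF x] by blast
    have dm: "deriv f y = m" if y: "\<bar>y - x\<bar> < e" for y
    proof -
      have "DERIV f y :> m"
        by (rule aff_deriv[of "x - e" y "x + e" f "f x - m * x" m]) (use e fm y in \<open>auto simp: algebra_simps\<close>)
      then show ?thesis by (rule DERIV_imp_deriv)
    qed
    have "((\<lambda>y. m) has_real_derivative 0) (at x)" by simp
    then show ?thesis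
      by (rule has_field_derivative_transform_within_open[of _ _ _ "{x - e <..< x + e}"])
         (use e dm in auto)
  qed
  define c where "c = (a + b) / 2"
  have c: "a < c" "c < b" using ab by (auto simp: c_def)
  define m0 where "m0 = deriv f c"
  have dc: "deriv f x = m0" if "a < x" "x < b" for x
    unfolding m0_def using DERIV_isconst3[of a b x c "deriv f"] der0 that c by auto
  have cont: "continuous_on {a..b} (\<lambda>x. f x - m0 * x)"
    using continuous_on_subset[OF PP_cont[OF f], of "{a..b}"] a
    by (intro continuous_on_diff continuous_on_mult continuous_on_const continuous_on_id) auto
  have h: "f x - m0 * x = f a - m0 * a" if "a \<le> x" "x \<le> b" for x
  proof (rule DERIV_isconst2[OF ab cont, of x, simplified])
    fix y assume y: "a < y" "y < b"
    have "DERIV f y :> m0" using der[OF y] dc[OF y] by simp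
    then have "DERIV (\<lambda>x. f x - m0 * x) y :> m0 - m0 * 1"
      by (intro derivative_intros) auto
    then show "DERIV (\<lambda>x. f x - m0 * x) y :> 0" by simp
  qed (use that in auto)
  show ?thesis using h by (intro exI[of _ m0] exI[of _ "f a - m0 * a"]) (auto simp: algebra_simps)
qed

lemma PP_slopes:
  assumes f: "PP f K" and l: "l \<in> slopes f" shows "1/K \<le> l \<and> l \<le> K"
proof -
  obtain t where t: "0 \<le> t" and d: "(f has_real_derivative l) (at t within {0..})"
    using l by (auto simp: slopes_def)
  obtain e0 m1 m2 where e0: "e0 > 0" and m: "1/K \<le> m1" "m1 \<le> K" "1/K \<le> m2" "m2 \<le> K"
      and lft: "\<And>x. 0 \<le> x \<Longrightarrow> t - e0 \<le> x \<Longrightarrow> x \<le> t \<Longrightarrow> f x = f t + m1 * (x - t)"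
      and rgt: "\<And>x. t \<le> x \<Longrightarrow> x \<le> t + e0 \<Longrightarrow> f x = f t + m2 * (x - t)"
    using PP_LA[OF f t] by (erule LAE)
  have "l = m2" using slope_right[OF d t e0 rgt] .
  then show ?thesis using m by auto
qed

lemma PP_PLd: assumes f: "PP f K" shows "f \<in> PLd_set"
proof -
  have K: "K \<ge> 1" using PP_K[OF f] .
  have g: "PP (finv f) K" using PP_finv[OF f] .
  have hom: "homeomorphism {0..} {0..} f (finv f)"
    unfolding homeomorphism_def
  proof (intro conjI ballI)
    show "finv f (f x) = x" for x using finv_f[OF f] .
    show "f (finv f y) = y" for y using f_finv[OF f] .
    show "continuous_on {0..} f" using PP_cont[OF f] .
    show "continuous_on {0..} (finv f)" using PP_cont[OF g] .
    show "f ` {0..} = {0..}"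
    proof
      show "f ` {0..} \<subseteq> {0..}" using PP_nonneg[OF f] by auto
      show "{0..} \<subseteq> f ` {0..}"
      proof
        fix y :: real assume "y \<in> {0..}"
        then have "finv f y \<in> {0..}" "y = f (finv f y)" using finv[OF f, of y] by auto
        then show "y \<in> f ` {0..}" by blast
      qed
    qed
    show "finv f ` {0..} = {0..}"
    proof
      show "finv f ` {0..} \<subseteq> {0..}" using PP_nonneg[OF g] by auto
      show "{0..} \<subseteq> finv f ` {0..}"
      proof
        fix x :: real assume "x \<in> {0..}"
        then have "f x \<in> {0..}" "x = finv f (f x)" using PP_nonneg[OF f, of x] finv_f[OF f, of x] by auto
        then show "x \<in> finv f ` {0..}" by blast
      qed
    qed
  qed
  have pl: "piecewise_linear f"
    unfolding piecewise_linear_def using PP_finite_break[OF f] PP_affine[OF f] by blast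
  have bs: "bounded_slopes f"
    unfolding bounded_slopes_def
  proof (intro exI[of _ "K + 1"] conjI ballI)
    show "K + 1 > 1" using K by simp
    fix l assume "l \<in> slopes f"
    then have l: "1/K \<le> l" "l \<le> K" using PP_slopes[OF f] by auto
    have "inverse (K + 1) < 1 / K" using K by (simp add: field_simps)
    moreover have "0 < 1 / K" using K by simp
    ultimately have l0: "0 \<le> l" "inverse (K + 1) < l" using l by linarith+
    then show "inverse (K + 1) < \<bar>l\<bar>" "\<bar>l\<bar> < K + 1" using l by auto
  qed
  show ?thesis unfolding PLd_set_def using hom pl bs PP_neg[OF f] by blast
qed

lemma piece_slope:
  assumes bs: "\<forall>l\<in>slopes f. inverse K0 < \<bar>l\<bar> \<and> \<bar>l\<bar> < K0"
    and sm: "strict_mono_on {0..} f"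
    and a: "0 \<le> a" and ab: "a < b"
    and aff: "\<forall>x\<in>{a..b}. f x = m * x + c"
    and nb: "{a<..<b} \<inter> breakpoints f = {}"
  shows "1/K0 \<le> m \<and> m \<le> K0"
proof -
  define p where "p = (a + b) / 2"
  have p: "a < p" "p < b" "0 < p" using a ab by (auto simp: p_def)
  then have "p \<notin> breakpoints f" using nb by auto
  then have "f differentiable at p within {0..}" using p by (simp add: breakpoints_def)
  then obtain l where l: "(f has_real_derivative l) (at p within {0..})"
    using real_differentiable_def by blast
  have "l \<in> slopes f" unfolding slopes_def using l p \<open>p \<notin> breakpoints f\<close> by auto
  have "l = m"
  proof (rule slope_right[OF l _ _])
    show "0 \<le> p" using p by simp
    show "0 < b - p" using p by simp
    fix x assume x: "p \<le> x" "x \<le> p + (b - p)"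
    have "f x = m * x + c" using aff x p by auto
    moreover have "f p = m * p + c" using aff p by auto
    ultimately show "f x = f p + m * (x - p)" by (simp add: algebra_simps)
  qed
  have "f a < f b" using sm a ab by (auto intro: strict_mono_onD)
  then have "m * a < m * b" using aff a ab by auto
  then have "m > 0" using ab by (smt (verit) mult_le_cancel_left)
  then show ?thesis using bs \<open>l \<in> slopes f\<close> \<open>l = m\<close> by (auto simp: inverse_eq_divide)
qed

lemma PLd_PP: assumes fG: "f \<in> PLd_set" shows "\<exists>K. PP f K"
proof -
  obtain g where hom: "homeomorphism {0..} {0..} f g" using fG by (auto simp: PLd_set_def)
  have pl: "piecewise_linear f" and bsl: "bounded_slopes f" and neg: "\<forall>x<0. f x = x"
    using fG by (auto simp: PLd_set_def)
  obtain K0 where K0: "K0 > 1" and bs: "\<forall>l\<in>slopes f. inverse K0 < \<bar>l\<bar> \<and> \<bar>l\<bar> < K0"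
    using bsl by (auto simp: bounded_slopes_def)
  have cont: "continuous_on {0..} f" and img: "f ` {0..} = {0..}" and gf: "\<forall>x\<in>{0..}. g (f x) = x"
    using hom by (auto simp: homeomorphism_def)
  have inj: "inj_on f {0..}" using gf by (metis inj_onI)
  have "strict_mono_on {0..} f \<or> strict_antimono_on {0..} f"
    using injective_eq_monotone_map[of "{0..}" f] inj cont is_interval_ci by blast
  moreover have "\<not> strict_antimono_on {0..} f"
  proof
    assume am: "strict_antimono_on {0..} f"
    have "f 0 \<in> {0..}" using img by auto
    then have "f 0 + 1 \<in> f ` {0..}" using img by auto
    then obtain x where x: "0 \<le> x" "f x = f 0 + 1" by auto
    show False
    proof (cases "x = 0")
      case True then show False using x by simp
    next
      case False
      then have "0 < x" using x by simp
      then have "f x < f 0" using monotone_onD[OF am, of 0 x] x by simp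
      then show False using x by simp
    qed
  qed
  ultimately have sm: "strict_mono_on {0..} f" by blast
  have f0: "f 0 = 0"
  proof -
    have "(0::real) \<in> f ` {0..}" using img by auto
    then obtain x where x: "0 \<le> x" "f x = 0" by auto
    have "f 0 \<ge> 0" using img by auto
    show ?thesis
    proof (cases "x = 0")
      case True then show ?thesis using x by simp
    next
      case False
      then have "0 < x" using x by simp
      then have "f 0 < f x" using strict_mono_onD[OF sm, of 0 x] x by simp
      then show ?thesis using x \<open>f 0 \<ge> 0\<close> by simp
    qed
  qed
  have fin: "\<And>M. finite (breakpoints f \<inter> {0..M})" and aff: "\<And>a b. 0 \<le> a \<Longrightarrow> a < b \<Longrightarrow>
     {a<..<b} \<inter> breakpoints f = {} \<Longrightarrow> \<exists>m c. \<forall>x \<in> {a..b}. f x = m * x + c"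
    using pl by (auto simp: piecewise_linear_def)
  have LAt: "LA f t K0" if t: "0 \<le> t" for t
  proof -
    define B where "B = breakpoints f \<inter> {0..t+1} - {t}"
    have "finite B" using fin[of "t+1"] by (auto simp: B_def)
    then have "open (- B)" by (simp add: finite_imp_closed open_Compl)
    moreover have "t \<in> - B" by (auto simp: B_def)
    ultimately obtain e1 where e1: "e1 > 0" "ball t e1 \<subseteq> - B" by (meson open_contains_ball)
    define e where "e = min e1 1 / 2"
    have e: "e > 0" "e < e1" "e < 1" using e1 by (auto simp: e_def)
    have nbk: "y \<notin> breakpoints f" if "y \<noteq> t" "\<bar>y - t\<bar> < e" for y
    proof
      assume yb: "y \<in> breakpoints f"
      then have "y \<in> {0..t+1}" using that e by (auto simp: breakpoints_def)
      then have "y \<in> B" using yb that by (auto simp: B_def)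
      moreover have "y \<in> ball t e1" using that e by (auto simp: dist_real_def)
      ultimately show False using e1 by auto
    qed
    have nbr: "{t<..<t+e} \<inter> breakpoints f = {}" using nbk by auto
    obtain m2 c2 where a2: "\<forall>x\<in>{t..t+e}. f x = m2 * x + c2" using aff[OF t _ nbr] e by auto
    have s2: "1/K0 \<le> m2 \<and> m2 \<le> K0" using piece_slope[OF bs sm t _ a2 nbr] e by simp
    have r: "f x = f t + m2 * (x - t)" if "t \<le> x" "x \<le> t + e" for x
    proof -
      have "f x = m2 * x + c2" "f t = m2 * t + c2" using a2 that e by auto
      then show ?thesis by (simp add: algebra_simps)
    qed
    show ?thesis
    proof (cases "t = 0")
      case True
      have lz: "f x = f t + 1 * (x - t)" if "0 \<le> x" "t - e \<le> x" "x \<le> t" for x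
          using that True by simp
      have "1/K0 \<le> 1" "1 \<le> K0" using K0 by auto
      then show ?thesis using s2 by (intro LAI[OF e(1) _ _ _ _ lz r]) auto
    next
      case False
      then have tp: "t > 0" using t by simp
      define a where "a = max 0 (t - e)"
      have a: "0 \<le> a" "a < t" "t - e \<le> a" using tp e by (auto simp: a_def)
      have nbl: "{a<..<t} \<inter> breakpoints f = {}" using nbk a by auto
      obtain m1 c1 where a1: "\<forall>x\<in>{a..t}. f x = m1 * x + c1" using aff[OF a(1) a(2) nbl] by auto
      have s1: "1/K0 \<le> m1 \<and> m1 \<le> K0" using piece_slope[OF bs sm a(1) a(2) a1 nbl] .
      have l: "f x = f t + m1 * (x - t)" if "0 \<le> x" "t - e \<le> x" "x \<le> t" for x
      proof -
        have "x \<in> {a..t}" using that a by (auto simp: a_def)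
        then have "f x = m1 * x + c1" "f t = m1 * t + c1" using a1 a by auto
        then show ?thesis by (simp add: algebra_simps)
      qed
      show ?thesis using s1 s2 by (intro LAI[OF e(1) _ _ _ _ l r]) auto
    qed
  qed
  have "PP f K0" unfolding PP_def using K0 LAt f0 neg by auto
  then show ?thesis by blast
qed

lemma lower_at_top:
  fixes u :: "'a \<Rightarrow> real"
  assumes c: "c > 0" and w: "filterlim w at_top F" and le: "eventually (\<lambda>x. w x / c \<le> u x) F"
  shows "filterlim u at_top F"
  unfolding filterlim_at_top
proof
  fix Z :: real
  have "eventually (\<lambda>x. c * Z \<le> w x) F" using w by (simp add: filterlim_at_top)
  then show "eventually (\<lambda>x. Z \<le> u x) F" using le
  proof eventually_elim
    case (elim x)
    then have "Z \<le> w x / c" using c by (simp add: pos_le_divide_eq mult.commute)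
    then show ?case using elim by linarith
  qed
qed

lemma PP_at_top: assumes f: "PP f K" shows "filterlim f at_top at_top"
proof -
  have K: "K > 0" using PP_K[OF f] by simp
  show ?thesis
  proof (rule lower_at_top[OF K filterlim_ident])
    show "eventually (\<lambda>x. x / K \<le> f x) at_top"
      using eventually_ge_at_top[of "0::real"] by (rule eventually_mono) (rule PP_lower[OF f])
  qed
qed

lemma PP_ratio:
  assumes g: "PP g K" and uv: "((\<lambda>y. u y / v y) \<longlongrightarrow> 1) F"
    and vp: "eventually (\<lambda>y. 0 < v y) F" and un: "eventually (\<lambda>y. 0 \<le> u y) F"
  shows "((\<lambda>y. g (u y) / g (v y)) \<longlongrightarrow> 1) F"
proof -
  have K: "K \<ge> 1" using PP_K[OF g] .
  have "((\<lambda>y. g (u y) / g (v y) - 1) \<longlongrightarrow> 0) F"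
  proof (rule Lim_null_comparison)
    show "eventually (\<lambda>y. norm (g (u y) / g (v y) - 1) \<le> K * K * \<bar>u y / v y - 1\<bar>) F"
      using vp un
    proof eventually_elim
      case (elim y)
      have gv: "v y / K \<le> g (v y)" using PP_lower[OF g] elim by auto
      have gvp: "0 < g (v y)" using PP_pos[OF g] elim by auto
      have lip: "\<bar>g (u y) - g (v y)\<bar> \<le> K * \<bar>u y - v y\<bar>" using PP_lip[OF g] elim by auto
      have "norm (g (u y) / g (v y) - 1) = \<bar>g (u y) - g (v y)\<bar> / g (v y)"
        using gvp by (simp add: field_simps abs_div)
      also have "\<dots> \<le> K * \<bar>u y - v y\<bar> / g (v y)"
        using lip gvp by (intro divide_right_mono) auto
      also have "\<dots> \<le> K * \<bar>u y - v y\<bar> / (v y / K)"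
      proof (rule divide_left_mono[OF gv])
        show "0 \<le> K * \<bar>u y - v y\<bar>" using K by simp
        have "0 < v y / K" using elim K by simp
        then show "0 < g (v y) * (v y / K)" using gvp by (rule mult_pos_pos[rotated])
      qed
      also have "\<dots> = K * K * \<bar>u y / v y - 1\<bar>"
        using elim K by (simp add: field_simps abs_div abs_mult)
      finally show ?case .
    qed
    have "((\<lambda>y. u y / v y - 1) \<longlongrightarrow> 0) F" using uv by (simp add: Lim_null[symmetric])
    then have "((\<lambda>y. \<bar>u y / v y - 1\<bar>) \<longlongrightarrow> 0) F" using tendsto_rabs_zero by blast
    then show "((\<lambda>y. K * K * \<bar>u y / v y - 1\<bar>) \<longlongrightarrow> 0) F"
      using tendsto_mult_right_zero by blast
  qed
  then show ?thesis by (simp add: Lim_null[symmetric])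
qed

lemma H_tendsto: "h \<in> H_asym \<Longrightarrow> ((\<lambda>x. h x / x) \<longlongrightarrow> 1) at_top"
  by (simp add: H_asym_def)

lemma H_comp_tendsto:
  assumes h: "h \<in> H_asym" and w: "filterlim w at_top F"
  shows "((\<lambda>x. h (w x) / w x) \<longlongrightarrow> 1) F"
  using filterlim_compose[OF H_tendsto[OF h] w] by simp

lemma PP_id: "PP id 1"
proof -
  have "LA id t 1" for t by (rule LAI[of 1 1 1 1]) auto
  then show ?thesis by (simp add: PP_def)
qed

lemma G_id: "id \<in> PLd_set" using PP_PLd[OF PP_id] .

lemma div_self_tendsto: "((\<lambda>x::real. x / x) \<longlongrightarrow> 1) at_top"
proof (rule Lim_transform_eventually[OF tendsto_const])
  show "eventually (\<lambda>x::real. 1 = x / x) at_top"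
    using eventually_gt_at_top[of "0::real"] by (rule eventually_mono) simp
qed

lemma H_id: "id \<in> H_asym" using G_id div_self_tendsto by (simp add: H_asym_def)

lemma H_G: "h \<in> H_asym \<Longrightarrow> h \<in> PLd_set" by (simp add: H_asym_def)

lemma G_comp: assumes "f \<in> PLd_set" "g \<in> PLd_set" shows "f \<circ> g \<in> PLd_set"
proof -
  obtain K1 K2 where "PP f K1" "PP g K2" using PLd_PP assms by blast
  then show ?thesis using PP_PLd PP_comp by blast
qed

lemma G_inv: assumes "f \<in> PLd_set" shows "finv f \<in> PLd_set"
proof -
  obtain K where "PP f K" using PLd_PP assms by blast
  then show ?thesis using PP_PLd PP_finv by blast
qed

lemma H_comp: assumes f: "f \<in> H_asym" and g: "g \<in> H_asym" shows "f \<circ> g \<in> H_asym"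
proof -
  obtain K where gK: "PP g K" using PLd_PP H_G[OF g] by blast
  have "((\<lambda>x. f (g x) / g x * (g x / x)) \<longlongrightarrow> 1 * 1) at_top"
    by (intro tendsto_mult H_comp_tendsto[OF f PP_at_top[OF gK]] H_tendsto[OF g])
  then have A: "((\<lambda>x. f (g x) / g x * (g x / x)) \<longlongrightarrow> 1) at_top" by simp
  have "((\<lambda>x. (f \<circ> g) x / x) \<longlongrightarrow> 1) at_top"
  proof (rule Lim_transform_eventually[OF A])
    show "eventually (\<lambda>x. f (g x) / g x * (g x / x) = (f \<circ> g) x / x) at_top"
      using eventually_gt_at_top[of "0::real"]
    proof (rule eventually_mono)
      fix x :: real assume "0 < x"
      then have "0 < g x" using PP_pos[OF gK] by auto
      then show "f (g x) / g x * (g x / x) = (f \<circ> g) x / x" by simp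
    qed
  qed
  then show ?thesis using G_comp[OF H_G[OF f] H_G[OF g]] by (simp add: H_asym_def)
qed

lemma H_inv: assumes f: "f \<in> H_asym" shows "finv f \<in> H_asym"
proof -
  obtain K where fK: "PP f K" using PLd_PP H_G[OF f] by blast
  have w: "filterlim (finv f) at_top at_top" using PP_at_top[OF PP_finv[OF fK]] .
  have "((\<lambda>x. inverse (f x / x)) \<longlongrightarrow> inverse 1) at_top"
    by (intro tendsto_inverse H_tendsto[OF f]) simp
  then have "((\<lambda>y. inverse (f (finv f y) / finv f y)) \<longlongrightarrow> 1) at_top"
    using filterlim_compose[OF _ w] by simp
  then have "((\<lambda>y. finv f y / y) \<longlongrightarrow> 1) at_top"
    using f_finv[OF fK] by simp
  then show ?thesis using G_inv[OF H_G[OF f]] by (simp add: H_asym_def)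
qed

lemma H_conj: assumes g: "g \<in> PLd_set" and h: "h \<in> H_asym" shows "g \<circ> h \<circ> finv g \<in> H_asym"
proof -
  obtain K where gK: "PP g K" using PLd_PP g by blast
  obtain Kh where hK: "PP h Kh" using PLd_PP H_G[OF h] by blast
  have w: "filterlim (finv g) at_top at_top" using PP_at_top[OF PP_finv[OF gK]] .
  have "((\<lambda>y. g (h (finv g y)) / g (finv g y)) \<longlongrightarrow> 1) at_top"
  proof (rule PP_ratio[OF gK])
    show "((\<lambda>y. h (finv g y) / finv g y) \<longlongrightarrow> 1) at_top" using H_comp_tendsto[OF h w] .
    show "eventually (\<lambda>y. 0 < finv g y) at_top"
      using eventually_gt_at_top[of "0::real"] by (rule eventually_mono) (rule PP_pos[OF PP_finv[OF gK]])
    show "eventually (\<lambda>y. 0 \<le> h (finv g y)) at_top"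
      using eventually_ge_at_top[of "0::real"]
      by (rule eventually_mono) (intro PP_nonneg[OF hK] PP_nonneg[OF PP_finv[OF gK]])
  qed
  then have "((\<lambda>y. (g \<circ> h \<circ> finv g) y / y) \<longlongrightarrow> 1) at_top"
    using f_finv[OF gK] by simp
  moreover have "g \<circ> h \<circ> finv g \<in> PLd_set"
    by (intro G_comp G_inv g H_G[OF h])
  ultimately show ?thesis by (simp add: H_asym_def)
qed

definition gs :: "real \<Rightarrow> real \<Rightarrow> real \<Rightarrow> real" where
  "gs L s x = (if x \<le> s then x else if x \<le> L * s then 2 * x - s
               else if x \<le> 2 * L * s then (2 * L - 2) * s + x / L else x)"

lemma LA_pieces:
  assumes "e > 0" "1/K \<le> m1" "m1 \<le> K" "1/K \<le> m2" "m2 \<le> K"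
    and l: "\<And>x. t - e \<le> x \<Longrightarrow> x \<le> t \<Longrightarrow> f x = c1 + m1 * x"
    and r: "\<And>x. t \<le> x \<Longrightarrow> x \<le> t + e \<Longrightarrow> f x = c2 + m2 * x"
  shows "LA f t K"
proof -
  have t1: "f t = c1 + m1 * t" using l[of t] assms(1) by simp
  have t2: "f t = c2 + m2 * t" using r[of t] assms(1) by simp
  show ?thesis
  proof (rule LAI[OF assms(1-5)])
    fix x assume "0 \<le> x" "t - e \<le> x" "x \<le> t"
    then have "f x = c1 + m1 * x" by (intro l)
    then show "f x = f t + m1 * (x - t)" using t1 by (simp add: algebra_simps)
  next
    fix x assume "t \<le> x" "x \<le> t + (e)"
    then have "f x = c2 + m2 * x" by (intro r)
    then show "f x = f t + m2 * (x - t)" using t2 by (simp add: algebra_simps)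
  qed
qed

context
  fixes L s :: real
  assumes L: "L \<ge> 2" and s: "s > 0"
begin

lemma R1: "x \<le> s \<Longrightarrow> gs L s x = 0 + 1 * x" by (simp add: gs_def)
lemma R2: "s \<le> x \<Longrightarrow> x \<le> L * s \<Longrightarrow> gs L s x = - s + 2 * x"
  by (auto simp: gs_def)
lemma R3: "L * s \<le> x \<Longrightarrow> x \<le> 2 * L * s \<Longrightarrow> gs L s x = (2 * L - 2) * s + (1 / L) * x"
proof -
  assume a: "L * s \<le> x" "x \<le> 2 * L * s"
  have Ls: "s < L * s" using L s by simp
  show ?thesis
  proof (cases "x = L * s")
    case True then show ?thesis using Ls L by (simp add: gs_def field_simps)
  next
    case False then show ?thesis using a Ls L by (auto simp: gs_def field_simps)
  qed
qed
lemma R4: "2 * L * s \<le> x \<Longrightarrow> gs L s x = 0 + 1 * x"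
proof -
  assume a: "2 * L * s \<le> x"
  have Ls: "s < L * s" "L * s < 2 * L * s" using L s by auto
  show ?thesis
  proof (cases "x = 2 * L * s")
    case True then show ?thesis using Ls L by (simp add: gs_def field_simps)
  next
    case False then show ?thesis using a Ls by (auto simp: gs_def)
  qed
qed

lemma gs_LA: "LA (gs L s) t L"
proof -
  have Ls: "s < L * s" "L * s < 2 * L * s" using L s by auto
  have b1: "1/L \<le> 1" using L by simp
  have b: "1/L \<le> 1" "1 \<le> L" "1/L \<le> 2" "2 \<le> L" "1/L \<le> 1/L" "1/L \<le> L" using L b1
    by linarith+
  consider "t < s" | "t = s" | "s < t" "t < L * s" | "t = L * s" | "L * s < t" "t < 2 * L * s"
    | "t = 2 * L * s" | "2 * L * s < t" by linarith
  then show ?thesis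
  proof cases
    case 1
    show ?thesis
    proof (rule LA_pieces[of "s - t" L 1 1 t _ 0 0])
      fix x assume "t - (s - t) \<le> x" "x \<le> t"
      then show "gs L s x = 0 + 1 * x" using 1 Ls L s by (intro R1) (auto simp: min_def split: if_splits)
    next
      fix x assume "t \<le> x" "x \<le> t + (s - t)"
      then show "gs L s x = 0 + 1 * x" using 1 Ls L s by (intro R1) (auto simp: min_def split: if_splits)
    qed (use 1 b Ls in auto)
  next
    case 2
    show ?thesis
    proof (rule LA_pieces[of "L * s - s" L 1 2 t _ 0 "- s"])
      fix x assume "t - (L * s - s) \<le> x" "x \<le> t"
      then show "gs L s x = 0 + 1 * x" using 2 Ls L s by (intro R1) (auto simp: min_def split: if_splits)
    next
      fix x assume "t \<le> x" "x \<le> t + (L * s - s)"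
      then show "gs L s x = - s + 2 * x" using 2 Ls L s by (intro R2) (auto simp: min_def split: if_splits)
    qed (use 2 b Ls in auto)
  next
    case 3
    show ?thesis
    proof (rule LA_pieces[of "min (t - s) (L * s - t)" L 2 2 t _ "- s" "- s"])
      fix x assume "t - (min (t - s) (L * s - t)) \<le> x" "x \<le> t"
      then show "gs L s x = - s + 2 * x" using 3 Ls L s by (intro R2) (auto simp: min_def split: if_splits)
    next
      fix x assume "t \<le> x" "x \<le> t + (min (t - s) (L * s - t))"
      then show "gs L s x = - s + 2 * x" using 3 Ls L s by (intro R2) (auto simp: min_def split: if_splits)
    qed (use 3 b Ls in auto)
  next
    case 4
    show ?thesis
    proof (rule LA_pieces[of "L * s - s" L 2 "1/L" t _ "- s" "(2 * L - 2) * s"])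
      fix x assume "t - (L * s - s) \<le> x" "x \<le> t"
      then show "gs L s x = - s + 2 * x" using 4 Ls L s by (intro R2) (auto simp: min_def split: if_splits)
    next
      fix x assume "t \<le> x" "x \<le> t + (L * s - s)"
      then show "gs L s x = (2 * L - 2) * s + (1/L) * x" using 4 Ls L s by (intro R3) (auto simp: min_def split: if_splits)
    qed (use 4 b Ls in auto)
  next
    case 5
    show ?thesis
    proof (rule LA_pieces[of "min (t - L * s) (2 * L * s - t)" L "1/L" "1/L" t _ "(2 * L - 2) * s" "(2 * L - 2) * s"])
      fix x assume "t - (min (t - L * s) (2 * L * s - t)) \<le> x" "x \<le> t"
      then show "gs L s x = (2 * L - 2) * s + (1/L) * x" using 5 Ls L s by (intro R3) (auto simp: min_def split: if_splits)
    next
      fix x assume "t \<le> x" "x \<le> t + (min (t - L * s) (2 * L * s - t))"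
      then show "gs L s x = (2 * L - 2) * s + (1/L) * x" using 5 Ls L s by (intro R3) (auto simp: min_def split: if_splits)
    qed (use 5 b Ls in auto)
  next
    case 6
    show ?thesis
    proof (rule LA_pieces[of "L * s" L "1/L" 1 t _ "(2 * L - 2) * s" 0])
      fix x assume "t - (L * s) \<le> x" "x \<le> t"
      then show "gs L s x = (2 * L - 2) * s + (1/L) * x" using 6 Ls L s by (intro R3) (auto simp: min_def split: if_splits)
    next
      fix x assume "t \<le> x" "x \<le> t + (L * s)"
      then show "gs L s x = 0 + 1 * x" using 6 Ls L s by (intro R4) (auto simp: min_def split: if_splits)
    qed (use 6 b Ls in auto)
  next
    case 7
    show ?thesis
    proof (rule LA_pieces[of "t - 2 * L * s" L 1 1 t _ 0 0])
      fix x assume "t - (t - 2 * L * s) \<le> x" "x \<le> t"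
      then show "gs L s x = 0 + 1 * x" using 7 Ls L s by (intro R4) (auto simp: min_def split: if_splits)
    next
      fix x assume "t \<le> x" "x \<le> t + (t - 2 * L * s)"
      then show "gs L s x = 0 + 1 * x" using 7 Ls L s by (intro R4) (auto simp: min_def split: if_splits)
    qed (use 7 b Ls in auto)
  qed
qed

end

lemma LA_cong:
  assumes LA: "LA f t K" and ev: "eventually (\<lambda>x. g x = f x) (nhds t)"
  shows "LA g t K"
proof -
  obtain d where d: "d > 0" and dd: "\<And>x. dist x t < d \<Longrightarrow> g x = f x"
    using ev unfolding eventually_nhds_metric by blast
  obtain e m1 m2 where e: "e > 0" and m: "1/K \<le> m1" "m1 \<le> K" "1/K \<le> m2" "m2 \<le> K"
      and l: "\<And>x. 0 \<le> x \<Longrightarrow> t - e \<le> x \<Longrightarrow> x \<le> t \<Longrightarrow> f x = f t + m1 * (x - t)"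
      and r: "\<And>x. t \<le> x \<Longrightarrow> x \<le> t + e \<Longrightarrow> f x = f t + m2 * (x - t)"
    using LA by (erule LAE)
  define e' where "e' = min e (d / 2)"
  have e': "e' > 0" "e' \<le> e" "e' < d" using e d by (auto simp: e'_def)
  have gt: "g t = f t" using dd[of t] d by simp
  show ?thesis
  proof (rule LAI[OF e'(1) m])
    fix x assume x: "0 \<le> x" "t - e' \<le> x" "x \<le> t"
    have "g x = f x" using x e' by (intro dd) (auto simp: dist_real_def)
    also have "f x = f t + m1 * (x - t)" using x e' by (intro l) auto
    finally show "g x = g t + m1 * (x - t)" using gt by simp
  next
    fix x assume x: "t \<le> x" "x \<le> t + e'"
    have "g x = f x" using x e' by (intro dd) (auto simp: dist_real_def)
    also have "f x = f t + m2 * (x - t)" using x e' by (intro r) auto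
    finally show "g x = g t + m2 * (x - t)" using gt by simp
  qed
qed

lemma key_core:
  assumes f: "PP f K" and dl: "\<delta> > 0" and freq: "\<And>M. \<exists>x\<ge>M. 0 < x \<and> (1 + \<delta>) * x \<le> f x"
  shows "\<exists>g\<in>PLd_set. \<forall>h1\<in>H_asym. \<forall>h2\<in>H_asym. g \<circ> f \<noteq> h1 \<circ> f \<circ> h2 \<circ> g"
proof -
  have K: "K \<ge> 1" using PP_K[OF f] .
  define L where "L = K + 1"
  have L: "L \<ge> 2" using K by (simp add: L_def)
  have "\<exists>s. \<forall>n. (real n \<le> s n \<and> 0 < s n \<and> (1 + \<delta>) * s n \<le> f (s n)) \<and> 2 * L * s n < s (Suc n)"
  proof (rule dependent_nat_choice)
    show "\<exists>x. real 0 \<le> x \<and> 0 < x \<and> (1 + \<delta>) * x \<le> f x" using freq[of 0] by auto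
    fix x n assume "real n \<le> x \<and> 0 < x \<and> (1 + \<delta>) * x \<le> f x"
    obtain y where y: "y \<ge> max (real (Suc n)) (2 * L * x + 1)" "0 < y" "(1 + \<delta>) * y \<le> f y"
      using freq by blast
    then show "\<exists>y. (real (Suc n) \<le> y \<and> 0 < y \<and> (1 + \<delta>) * y \<le> f y) \<and> 2 * L * x < y"
      by (intro exI[of _ y]) auto
  qed
  then obtain s where sn: "\<And>n. real n \<le> s n" and sp: "\<And>n. 0 < s n"
    and sf: "\<And>n. (1 + \<delta>) * s n \<le> f (s n)" and ss: "\<And>n. 2 * L * s n < s (Suc n)" by blast
  have sSuc: "s n \<le> s (Suc n)" for n
  proof -
    have "s n \<le> 2 * L * s n" using sp[of n] L by simp
    then show ?thesis using ss[of n] by simp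
  qed
  have smono: "m \<le> n \<Longrightarrow> s m \<le> s n" for m n using lift_Suc_mono_le[of s, OF sSuc] by blast
  have sep: "2 * L * s m < s n" if mn: "m < n" for m n
  proof -
    obtain k where k: "n = Suc k" "m \<le> k" using mn by (cases n) auto
    have "2 * L * s m \<le> 2 * L * s k" using smono[OF k(2)] L by simp
    then show ?thesis using ss[of k] k by simp
  qed
  define B where "B n = {s n .. 2 * L * s n}" for n
  have disj: "m = n" if "x \<in> B m" "x \<in> B n" for x m n
  proof (rule ccontr)
    assume "m \<noteq> n"
    then consider "m < n" | "n < m" by linarith
    then show False
    proof cases
      case 1 then show False using sep[OF 1] that by (auto simp: B_def)
    next
      case 2 then show False using sep[OF 2] that by (auto simp: B_def)
    qed
  qed
  define g where "g x = (if \<exists>n. x \<in> B n then gs L (s (SOME n. x \<in> B n)) x else x)" for x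
  have gkey: "g x = gs L (s n) x" if nb: "\<And>m. m \<noteq> n \<Longrightarrow> x \<notin> B m" for x n
  proof (cases "x \<in> B n")
    case True
    then have "\<exists>n. x \<in> B n" by blast
    moreover have "(SOME n. x \<in> B n) = n"
    proof -
      have "x \<in> B (SOME n. x \<in> B n)" using True by (rule someI)
      then show ?thesis using True disj by blast
    qed
    ultimately show ?thesis by (simp add: g_def)
  next
    case False
    have "\<not> (\<exists>n. x \<in> B n)"
    proof
      assume "\<exists>k. x \<in> B k"
      then obtain k where k: "x \<in> B k" by blast
      show False
      proof (cases "k = n")
        case True then show False using k False by simp
      next
        case False then show False using nb[OF False] k by simp
      qed
    qed
    then have "g x = x" by (simp add: g_def)
    moreover have "gs L (s n) x = x"
    proof -
      have Ls: "s n < L * s n" "L * s n < 2 * L * s n" using L sp[of n] by auto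
      have "x < s n \<or> 2 * L * s n < x" using False by (auto simp: B_def)
      then show ?thesis
      proof
        assume "x < s n" then show ?thesis by (simp add: gs_def)
      next
        assume a: "2 * L * s n < x"
        then have "\<not> x \<le> s n" "\<not> x \<le> L * s n" "\<not> x \<le> 2 * L * s n" using Ls by auto
        then show ?thesis by (simp add: gs_def)
      qed
    qed
    ultimately show ?thesis by simp
  qed
  have loc: "\<exists>n. eventually (\<lambda>x. \<forall>m. m \<noteq> n \<longrightarrow> x \<notin> B m) (nhds t)" for t
  proof -
    define n where "n = (if \<exists>n. t \<in> B n then (SOME n. t \<in> B n) else 0)"
    have tn: "t \<notin> B m" if "m \<noteq> n" for m
    proof
      assume tm: "t \<in> B m"
      then have "t \<in> B (SOME n. t \<in> B n)" by (rule someI)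
      then have "(SOME n. t \<in> B n) = m" using tm disj by blast
      moreover have "\<exists>n. t \<in> B n" using tm by blast
      ultimately have "n = m" by (simp add: n_def)
      then show False using that by simp
    qed
    define N where "N = nat \<lceil>t + 1\<rceil>"
    have N: "t + 1 \<le> real N" unfolding N_def by linarith
    have e1: "eventually (\<lambda>x. x < t + 1) (nhds t)"
      using eventually_nhds_in_open[of "{..<t+1}" t] by simp
    have e2: "eventually (\<lambda>x. \<forall>m\<in>{..<N}. m \<noteq> n \<longrightarrow> x \<notin> B m) (nhds t)"
    proof (rule eventually_ball_finite)
      show "finite {..<N}" by simp
      show "\<forall>m\<in>{..<N}. eventually (\<lambda>x. m \<noteq> n \<longrightarrow> x \<notin> B m) (nhds t)"
      proof
        fix m assume "m \<in> {..<N}"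
        show "eventually (\<lambda>x. m \<noteq> n \<longrightarrow> x \<notin> B m) (nhds t)"
        proof (cases "m = n")
          case True then show ?thesis by simp
        next
          case False
          have "eventually (\<lambda>x. x \<in> - B m) (nhds t)"
            by (rule eventually_nhds_in_open) (use tn[OF False] in \<open>auto simp: B_def\<close>)
          then show ?thesis by (rule eventually_mono) simp
        qed
      qed
    qed
    have "eventually (\<lambda>x. \<forall>m. m \<noteq> n \<longrightarrow> x \<notin> B m) (nhds t)"
      using e1 e2
    proof eventually_elim
      case (elim x)
      show ?case
      proof (intro allI impI)
        fix m assume mn: "m \<noteq> n"
        show "x \<notin> B m"
        proof (cases "m < N")
          case True then show ?thesis using elim mn by auto
        next
          case False
          then have "real N \<le> s m" using sn[of m] by (meson not_less of_nat_le_iff order_trans)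
          then show ?thesis using elim N by (auto simp: B_def)
        qed
      qed
    qed
    then show ?thesis by blast
  qed
  have gLA: "LA g t L" if t: "0 \<le> t" for t
  proof -
    obtain n where ev: "eventually (\<lambda>x. \<forall>m. m \<noteq> n \<longrightarrow> x \<notin> B m) (nhds t)" using loc by blast
    have "LA (gs L (s n)) t L" using gs_LA[OF L sp[of n]] .
    moreover have "eventually (\<lambda>x. g x = gs L (s n) x) (nhds t)"
      using ev by (rule eventually_mono) (rule gkey, blast)
    ultimately show ?thesis by (rule LA_cong)
  qed
  have gneg: "g x = x" if "x \<le> 0" for x
  proof -
    have "x \<notin> B m" for m using sp[of m] that by (auto simp: B_def)
    then show ?thesis by (simp add: g_def)
  qed
  have gPP: "PP g L" unfolding PP_def using L gLA gneg by auto
  have gG: "g \<in> PLd_set" using PP_PLd[OF gPP] .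
  have inB: "\<And>m. m \<noteq> n \<Longrightarrow> x \<notin> B m" if "x \<in> B n" for x n using that disj by blast
  have gs_n: "g (s n) = s n" for n
  proof -
    have "s n \<in> B n" using sp[of n] L by (auto simp: B_def)
    then have "g (s n) = gs L (s n) (s n)" by (intro gkey inB)
    then show ?thesis by (simp add: gs_def)
  qed
  have gfs_n: "g (f (s n)) = 2 * f (s n) - s n" for n
  proof -
    have lo: "s n \<le> f (s n)" using sf[of n] sp[of n] dl by (smt (verit) mult_le_cancel_right1)
    have "f (s n) \<le> K * s n" using PP_upper[OF f] sp[of n] by simp
    also have "\<dots> \<le> L * s n" using sp[of n] by (simp add: L_def)
    finally have hi: "f (s n) \<le> L * s n" .
    then have "f (s n) \<in> B n" using lo L sp[of n] by (auto simp: B_def)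
    then have "g (f (s n)) = gs L (s n) (f (s n))" by (intro gkey inB)
    also have "\<dots> = - s n + 2 * f (s n)" by (rule R2[OF L sp lo hi])
    finally show ?thesis by simp
  qed
  have "\<forall>h1\<in>H_asym. \<forall>h2\<in>H_asym. g \<circ> f \<noteq> h1 \<circ> f \<circ> h2 \<circ> g"
  proof (intro ballI notI)
    fix h1 h2 assume h1: "h1 \<in> H_asym" and h2: "h2 \<in> H_asym" and eq: "g \<circ> f = h1 \<circ> f \<circ> h2 \<circ> g"
    obtain K2 where h2K: "PP h2 K2" using PLd_PP H_G[OF h2] by blast
    have A: "((\<lambda>x. f (h2 x) / f x) \<longlongrightarrow> 1) at_top"
    proof -
      have "((\<lambda>x. f (h2 x) / f (id x)) \<longlongrightarrow> 1) at_top"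
      proof (rule PP_ratio[OF f])
        show "((\<lambda>x::real. h2 x / id x) \<longlongrightarrow> 1) at_top" using H_tendsto[OF h2] by simp
        show "eventually (\<lambda>x::real. 0 < id x) at_top" using eventually_gt_at_top[of "0::real"]
          by (rule eventually_mono) simp
        show "eventually (\<lambda>x. 0 \<le> h2 x) at_top"
          using eventually_ge_at_top[of "0::real"] by (rule eventually_mono) (rule PP_nonneg[OF h2K])
      qed
      then show ?thesis by simp
    qed
    have w: "filterlim (\<lambda>x. f (h2 x)) at_top at_top"
      using filterlim_compose[OF PP_at_top[OF f] PP_at_top[OF h2K]] .
    have B': "((\<lambda>x. h1 (f (h2 x)) / f (h2 x)) \<longlongrightarrow> 1) at_top"
      using H_comp_tendsto[OF h1 w] .
    have "((\<lambda>x. h1 (f (h2 x)) / f (h2 x) * (f (h2 x) / f x)) \<longlongrightarrow> 1 * 1) at_top"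
      by (intro tendsto_mult A B')
    then have C: "((\<lambda>x. h1 (f (h2 x)) / f (h2 x) * (f (h2 x) / f x)) \<longlongrightarrow> 1) at_top" by simp
    define c where "c = 1 + \<delta> / (1 + \<delta>)"
    have "1 < c" using dl by (simp add: c_def)
    then have "eventually (\<lambda>x. h1 (f (h2 x)) / f (h2 x) * (f (h2 x) / f x) < c) at_top"
      using order_tendstoD(2)[OF C] by blast
    then obtain N0 where N0: "\<And>x. x \<ge> N0 \<Longrightarrow> h1 (f (h2 x)) / f (h2 x) * (f (h2 x) / f x) < c"
      by (auto simp: eventually_at_top_linorder)
    define n where "n = nat \<lceil>N0\<rceil>"
    have "N0 \<le> s n" using sn[of n] unfolding n_def by linarith
    then have lt: "h1 (f (h2 (s n))) / f (h2 (s n)) * (f (h2 (s n)) / f (s n)) < c" by (rule N0)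
    have pos: "0 < f (h2 (s n))" using PP_pos[OF f PP_pos[OF h2K sp[of n]]] .
    have "h1 (f (h2 (s n))) = g (f (s n))"
      using fun_cong[OF eq, of "s n"] gs_n[of n] by simp
    then have eqv: "h1 (f (h2 (s n))) / f (h2 (s n)) * (f (h2 (s n)) / f (s n)) = (2 * f (s n) - s n) / f (s n)"
      using pos gfs_n[of n] by simp
    have cle: "c \<le> (2 * f (s n) - s n) / f (s n)"
    proof -
      have fp: "0 < f (s n)" using PP_pos[OF f sp[of n]] .
      have "(1 + \<delta>) * s n \<le> f (s n)" by (rule sf)
      then show ?thesis using fp dl sp[of n] unfolding c_def by (simp add: field_simps)
    qed
    show False using lt eqv cle by linarith
  qed
  then show ?thesis using gG by blast
qed

lemma not_tendsto_freq:
  fixes u :: "real \<Rightarrow> real"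
  assumes "\<not> (u \<longlongrightarrow> 1) at_top"
  shows "\<exists>\<delta>>0. \<forall>M. \<exists>x\<ge>M. \<delta> \<le> \<bar>u x - 1\<bar>"
proof (rule ccontr)
  assume "\<not> ?thesis"
  then have h0: "\<forall>\<delta>>0. \<exists>M. \<forall>x\<ge>M. \<not> \<delta> \<le> \<bar>u x - 1\<bar>" by blast
  have h: "\<exists>M. \<forall>x\<ge>M. \<bar>u x - 1\<bar> < \<delta>" if "\<delta> > 0" for \<delta>
    using h0 that by (meson not_le)
  have "(u \<longlongrightarrow> 1) at_top"
  proof (rule tendstoI)
    fix e :: real assume e: "e > 0"
    obtain M where "\<forall>x\<ge>M. \<bar>u x - 1\<bar> < e" using h[OF e] by blast
    then show "eventually (\<lambda>x. dist (u x) 1 < e) at_top"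
      by (auto simp: eventually_at_top_linorder dist_real_def)
  qed
  then show False using assms by simp
qed

lemma key:
  assumes fG: "f \<in> PLd_set" and fH: "f \<notin> H_asym"
  shows "\<exists>g\<in>PLd_set. \<forall>h1\<in>H_asym. \<forall>h2\<in>H_asym. g \<circ> f \<noteq> h1 \<circ> f \<circ> h2 \<circ> g"
proof -
  obtain K where f: "PP f K" using PLd_PP[OF fG] by blast
  have K: "K \<ge> 1" using PP_K[OF f] .
  have "\<not> ((\<lambda>x. f x / x) \<longlongrightarrow> 1) at_top" using fG fH by (simp add: H_asym_def)
  then obtain \<delta> where dl: "\<delta> > 0" and fr: "\<And>M. \<exists>x\<ge>M. \<delta> \<le> \<bar>f x / x - 1\<bar>"
    using not_tendsto_freq by blast
  show ?thesis
  proof (cases "\<forall>M. \<exists>x\<ge>M. 0 < x \<and> (1 + \<delta>) * x \<le> f x")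
    case True
    then show ?thesis using key_core[OF f dl] by blast
  next
    case False
    then obtain M0 where M0': "\<forall>x\<ge>M0. \<not> (0 < x \<and> (1 + \<delta>) * x \<le> f x)"
      by blast
    have M0: "f x < (1 + \<delta>) * x" if "x \<ge> M0" "0 < x" for x
      using M0' that by (meson not_le)
    have fi: "PP (finv f) K" using PP_finv[OF f] .
    have fr2: "\<exists>y\<ge>M. 0 < y \<and> (1 + \<delta>) * y \<le> finv f y" for M
    proof -
      obtain x where x: "x \<ge> max (max M0 1) (K * max M 1)" "\<delta> \<le> \<bar>f x / x - 1\<bar>" using fr by blast
      have xp: "0 < x" using x(1) by simp
      have "f x < (1 + \<delta>) * x" using M0 x(1) xp by simp
      then have "f x / x - 1 < \<delta>" using xp by (simp add: field_simps)
      then have "f x / x - 1 \<le> - \<delta>" using x(2) by linarith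
      then have fle: "f x \<le> (1 - \<delta>) * x" using xp by (simp add: field_simps)
      have fxp: "0 < f x" using PP_pos[OF f xp] .
      have "x / K \<le> f x" using PP_lower[OF f] xp by simp
      moreover have "max M 1 \<le> x / K"
      proof -
        have km: "K * max M 1 \<le> x" using x(1) by simp
        have "(K * max M 1) / K \<le> x / K" using km K by (intro divide_right_mono) auto
        then show ?thesis using K by simp
      qed
      ultimately have yM: "M \<le> f x" by linarith
      have "(1 + \<delta>) * f x \<le> (1 + \<delta>) * ((1 - \<delta>) * x)" using fle dl by (intro mult_left_mono) auto
      also have "\<dots> = x - \<delta> * \<delta> * x" by (simp add: algebra_simps)
      also have "\<dots> \<le> x" using xp by simp
      finally have "(1 + \<delta>) * f x \<le> finv f (f x)" using finv_f[OF f] by simp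
      then show ?thesis using yM fxp by blast
    qed
    obtain g where gG: "g \<in> PLd_set"
      and ng: "\<forall>h1\<in>H_asym. \<forall>h2\<in>H_asym. g \<circ> finv f \<noteq> h1 \<circ> finv f \<circ> h2 \<circ> g"
      using key_core[OF fi dl fr2] by blast
    have "\<forall>h1\<in>H_asym. \<forall>h2\<in>H_asym. g \<circ> f \<noteq> h1 \<circ> f \<circ> h2 \<circ> g"
    proof (intro ballI notI)
      fix h1 h2 assume h1: "h1 \<in> H_asym" and h2: "h2 \<in> H_asym" and eq: "g \<circ> f = h1 \<circ> f \<circ> h2 \<circ> g"
      obtain K1 where h1K: "PP h1 K1" using PLd_PP H_G[OF h1] by blast
      obtain K2 where h2K: "PP h2 K2" using PLd_PP H_G[OF h2] by blast
      have "g \<circ> finv f = finv h2 \<circ> finv f \<circ> finv h1 \<circ> g"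
      proof
        fix y
        define x where "x = finv f y"
        have fx: "f x = y" using f_finv[OF f] by (simp add: x_def)
        have "g (f x) = h1 (f (h2 (g x)))" using fun_cong[OF eq, of x] by simp
        then have "g y = h1 (f (h2 (g x)))" using fx by simp
        then have "finv h1 (g y) = f (h2 (g x))" using finv_f[OF h1K] by simp
        then have "finv f (finv h1 (g y)) = h2 (g x)" using finv_f[OF f] by simp
        then have "finv h2 (finv f (finv h1 (g y))) = g x" using finv_f[OF h2K] by simp
        then show "(g \<circ> finv f) y = (finv h2 \<circ> finv f \<circ> finv h1 \<circ> g) y" by (simp add: x_def)
      qed
      then show False using ng H_inv[OF h1] H_inv[OF h2] by blast
    qed
    then show ?thesis using gG by blast
  qed
qed

lemma rcos_PLd: "r_coset PLd H a = (\<lambda>h. h \<circ> a) ` H"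
  by (auto simp: r_coset_def PLd_def)

lemma smult_PLd: "set_mult PLd A B = {a \<circ> b | a b. a \<in> A \<and> b \<in> B}"
  by (auto simp: set_mult_def PLd_def)

lemma rcos_H: assumes fH: "f \<in> H_asym" shows "(\<lambda>h. h \<circ> f) ` H_asym = H_asym"
proof
  show "(\<lambda>h. h \<circ> f) ` H_asym \<subseteq> H_asym" using H_comp fH by auto
  show "H_asym \<subseteq> (\<lambda>h. h \<circ> f) ` H_asym"
  proof
    fix h assume h: "h \<in> H_asym"
    obtain K where fK: "PP f K" using PLd_PP H_G[OF fH] by blast
    have "h = (h \<circ> finv f) \<circ> f" using finv_f[OF fK] by (auto simp: fun_eq_iff)
    moreover have "h \<circ> finv f \<in> H_asym" using H_comp[OF h H_inv[OF fH]] .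
    ultimately show "h \<in> (\<lambda>h. h \<circ> f) ` H_asym" by blast
  qed
qed

theorem theorem3:
  shows "group_center (PLd Mod H_asym) = {\<one>\<^bsub>PLd Mod H_asym\<^esub>}"
proof -
  have carr: "carrier (PLd Mod H_asym) = (\<lambda>a. (\<lambda>h. h \<circ> a) ` H_asym) ` PLd_set"
    unfolding carrier_FactGroup
    apply (rule image_cong)
     apply (simp add: PLd_def)
    apply (rule rcos_PLd)
    done
  have mul: "\<And>A B. A \<otimes>\<^bsub>PLd Mod H_asym\<^esub> B = {a \<circ> b | a b. a \<in> A \<and> b \<in> B}"
    by (simp add: smult_PLd)
  have one: "\<one>\<^bsub>PLd Mod H_asym\<^esub> = H_asym" by simp
  have eH: "(\<lambda>h. h \<circ> id) ` H_asym = H_asym" by (rule rcos_H[OF H_id])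
  have Hc: "H_asym \<in> carrier (PLd Mod H_asym)"
    unfolding carr
  proof (rule image_eqI[of _ _ id])
    show "H_asym = (\<lambda>h. h \<circ> id) ` H_asym" using eH by simp
    show "id \<in> PLd_set" by (rule G_id)
  qed
  have center_H: "H_asym \<otimes>\<^bsub>PLd Mod H_asym\<^esub> C = C \<otimes>\<^bsub>PLd Mod H_asym\<^esub> H_asym"
    if C: "C \<in> carrier (PLd Mod H_asym)" for C
  proof -
    obtain g where gG: "g \<in> PLd_set" and Cg: "C = (\<lambda>h. h \<circ> g) ` H_asym" using C carr by auto
    obtain K where gK: "PP g K" using PLd_PP gG by blast
    show ?thesis unfolding mul Cg
    proof (intro equalityI subsetI)
      fix x assume "x \<in> {a \<circ> b |a b. a \<in> H_asym \<and> b \<in> (\<lambda>h. h \<circ> g) ` H_asym}"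
      then obtain h1 h2 where h: "h1 \<in> H_asym" "h2 \<in> H_asym" and x: "x = h1 \<circ> (h2 \<circ> g)" by auto
      have "x = ((h1 \<circ> h2) \<circ> g) \<circ> id" using x by (simp add: o_assoc)
      moreover have "(h1 \<circ> h2) \<circ> g \<in> (\<lambda>h. h \<circ> g) ` H_asym" using H_comp[OF h] by blast
      ultimately show "x \<in> {a \<circ> b |a b. a \<in> (\<lambda>h. h \<circ> g) ` H_asym \<and> b \<in> H_asym}" using H_id by blast
    next
      fix x assume "x \<in> {a \<circ> b |a b. a \<in> (\<lambda>h. h \<circ> g) ` H_asym \<and> b \<in> H_asym}"
      then obtain h1 h2 where h: "h1 \<in> H_asym" "h2 \<in> H_asym" and x: "x = (h1 \<circ> g) \<circ> h2" by auto
      have "x = (h1 \<circ> (g \<circ> h2 \<circ> finv g)) \<circ> (id \<circ> g)"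
        using x finv_f[OF gK] by (auto simp: fun_eq_iff)
      moreover have "h1 \<circ> (g \<circ> h2 \<circ> finv g) \<in> H_asym" using H_comp[OF h(1) H_conj[OF gG h(2)]] .
      moreover have "id \<circ> g \<in> (\<lambda>h. h \<circ> g) ` H_asym" using H_id by blast
      ultimately show "x \<in> {a \<circ> b |a b. a \<in> H_asym \<and> b \<in> (\<lambda>h. h \<circ> g) ` H_asym}" by blast
    qed
  qed
  show ?thesis
  proof (intro equalityI subsetI)
    fix z assume z: "z \<in> group_center (PLd Mod H_asym)"
    then have zc: "z \<in> carrier (PLd Mod H_asym)"
      and comm: "\<And>C. C \<in> carrier (PLd Mod H_asym) \<Longrightarrow> z \<otimes>\<^bsub>PLd Mod H_asym\<^esub> C = C \<otimes>\<^bsub>PLd Mod H_asym\<^esub> z"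
      by (auto simp: group_center_def)
    obtain f where fG: "f \<in> PLd_set" and zf: "z = (\<lambda>h. h \<circ> f) ` H_asym" using zc carr by auto
    have "f \<in> H_asym"
    proof (rule ccontr)
      assume fH: "f \<notin> H_asym"
      obtain g where gG: "g \<in> PLd_set"
        and ng: "\<forall>h1\<in>H_asym. \<forall>h2\<in>H_asym. g \<circ> f \<noteq> h1 \<circ> f \<circ> h2 \<circ> g"
        using key[OF fG fH] by blast
      define C where "C = (\<lambda>h. h \<circ> g) ` H_asym"
      have Cc: "C \<in> carrier (PLd Mod H_asym)" unfolding carr C_def using gG by blast
      have m1: "id \<circ> g \<in> C" unfolding C_def using H_id by blast
      have m2: "id \<circ> f \<in> z" unfolding zf using H_id by blast
      have "g \<circ> f = (id \<circ> g) \<circ> (id \<circ> f)" by simp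
      then have "g \<circ> f \<in> C \<otimes>\<^bsub>PLd Mod H_asym\<^esub> z"
        unfolding mul using m1 m2 by blast
      then have "g \<circ> f \<in> z \<otimes>\<^bsub>PLd Mod H_asym\<^esub> C" using comm[OF Cc] by simp
      then obtain h1 h2 where h: "h1 \<in> H_asym" "h2 \<in> H_asym" and e: "g \<circ> f = (h1 \<circ> f) \<circ> (h2 \<circ> g)"
        unfolding mul C_def zf by auto
      have "g \<circ> f = h1 \<circ> f \<circ> h2 \<circ> g" using e by (simp add: o_assoc)
      then show False using ng h by blast
    qed
    then have "z = H_asym" using zf rcos_H by simp
    then show "z \<in> {\<one>\<^bsub>PLd Mod H_asym\<^esub>}" by simp
  next
    fix z assume "z \<in> {\<one>\<^bsub>PLd Mod H_asym\<^esub>}"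
    then have "z = H_asym" by simp
    then show "z \<in> group_center (PLd Mod H_asym)"
      using Hc center_H by (auto simp: group_center_def)
  qed
qed

end
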